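(* Fix $\phi\in\mathbb{R}^d$ with $\mu=\|\phi\|^2>0$, a ground-truth class $y\in[V]$ with one-hot label ${\bm y}={\bm e}_y$, softmax cross-entropy $f({\bm z},{\bm y})=-\sum_k y_k\log p_k({\bm z})$ (with $L$ a uniform bound on the norms of its first three ${\bm z}$-derivatives), $\kappa\ge0$, and ${\bm W}^t\in\mathbb{R}^{V\times d}$. Let ${\bm z}^t={\bm W}^t\phi$, ${\bm p}^t=\mathrm{softmax}({\bm z}^t)$, ${\bm g}^t={\bm p}^t-{\bm y}$, ${\bm H}^t_{{\bm z}}=\mathrm{diag}({\bm p}^t)-{\bm p}^t({\bm p}^t)^\top$, $y^*=\arg\max_{j\neq y}p_j^t$. Let $S=p^t_y+p^t_{y^*}$, $\tau=1-S$, $\bar p_y=p^t_y/S$, $\Delta_{\mathrm{bin}}(\bar p_y)=4\bar p_y(1-\bar p_y)^2$, $B=\sqrt2$, and assume there exists $\gamma_0>0$ with $$\frac{4Be^2}{p^t_{y^*}}\tau\le\gamma_0\le\Delta_{\mathrm{bin}}(\bar p_y)-6\tau.$$ For step size $\eta$ with $|\eta|\in(0,1]$ take $|\rho|=\kappa\sqrt{|\eta|}$, set $\eta'=\eta\mu$ and $\tilde\rho^{\,t}=\rho\sqrt\mu/\|{\bm g}^t\|$ ($0$ if ${\bm g}^t=0$), and assume the sign condition $\eta'\tilde\rho^{\,t}>0$. With $F({\bm W})=f({\bm W}\phi,{\bm y})$, define ${\bm W}^{t+1}(\mathrm{GD})={\bm W}^t-\eta\nabla F({\bm W}^t)$, ${\bm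 W}^{t+1}(\mathrm{SAM})={\bm W}^t-\eta\nabla F({\bm W}^t+\rho\nabla F({\bm W}^t)/\|\nabla F({\bm W}^t)\|)$, and $\alpha_i^{(a)}=p_i^{t+1}(a)/p_i^t$ with ${\bm p}^{t+1}(a)=\mathrm{softmax}({\bm W}^{t+1}(a)\phi)$. Then there exists $\eta_0>0$, depending only on $({\bm p}^t,{\bm H}^t_{{\bm z}},\|{\bm g}^t\|,\mu,\kappa,L,\gamma_0)$, such that for all $0<|\eta|\le\eta_0$, $$\alpha^{\mathrm{SAM}}_y\ge\alpha^{\mathrm{GD}}_y.$$ Moreover the inequality is strict whenever $\tilde\rho^{\,t}\neq0$ and $p^t_{y^*}\in(0,1)$, and equality holds when $\tilde\rho^{\,t}=0$.
   Context: $\|\cdot\|$ is Euclidean/Frobenius norm; $\nabla F({\bm W})=({\bm p}({\bm W}\phi)-{\bm y})\phi^\top$. $\alpha_i$ is the one-step confidence ratio of class $i$. *)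

theory Defs
  imports "HOL-Analysis.Analysis"
begin

text \<open>Classes are indexed by a finite type 'v (so V = CARD('v)), features by 'd.
  Weight matrices W in R^{V x d} have type real^'d^'v; norm on them is Frobenius.\<close>

definition softmax :: "real^'v \<Rightarrow> real^'v" where
  "softmax z = (\<chi> i. exp (z$i) / (\<Sum>j\<in>UNIV. exp (z$j)))"

definition onehot :: "'v \<Rightarrow> real^'v" where
  "onehot y = (\<chi> i. if i = y then 1 else 0)"

definition ce_loss :: "real^'v \<Rightarrow> real^'v \<Rightarrow> real" where
  "ce_loss z yv = - (\<Sum>k\<in>UNIV. yv$k * ln (softmax z $ k))"

text \<open>Gradient of F(W) = f(W phi, e_y):  (p(W phi) - e_y) phi^T.\<close>
definition gradF :: "real^'d \<Rightarrow> 'v \<Rightarrow> real^'d^'v \<Rightarrow> real^'d^'v" where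
  "gradF phi y W = (\<chi> i j. (softmax (W *v phi) - onehot y)$i * phi$j)"

definition gd_step :: "real \<Rightarrow> real^'d \<Rightarrow> 'v \<Rightarrow> real^'d^'v \<Rightarrow> real^'d^'v" where
  "gd_step \<eta> phi y W = W - \<eta> *\<^sub>R gradF phi y W"

definition sam_step :: "real \<Rightarrow> real \<Rightarrow> real^'d \<Rightarrow> 'v \<Rightarrow> real^'d^'v \<Rightarrow> real^'d^'v" where
  "sam_step \<eta> \<rho> phi y W =
     W - \<eta> *\<^sub>R gradF phi y (W + (\<rho> / norm (gradF phi y W)) *\<^sub>R gradF phi y W)"

definition conf_ratio :: "real^'d \<Rightarrow> real^'d^'v \<Rightarrow> real^'d^'v \<Rightarrow> 'v \<Rightarrow> real" where
  "conf_ratio phi Wnew W i = softmax (Wnew *v phi) $ i / softmax (W *v phi) $ i"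

end

theory Submission
  imports Defs
begin

definition outer :: "real^'v \<Rightarrow> real^'d \<Rightarrow> real^'d^'v" where
  "outer h phi = (\<chi> i j. h$i * phi$j)"

lemma gradF_outer: "gradF phi y W = outer (softmax (W *v phi) - onehot y) phi"
  by (simp add: gradF_def outer_def)

lemma mv_outer: "(W + c *\<^sub>R outer h phi) *v phi = W *v phi + (c * (norm phi)\<^sup>2) *\<^sub>R h"
proof -
  have n: "(norm phi)\<^sup>2 = (\<Sum>j\<in>UNIV. phi$j * phi$j)"
    by (simp add: power2_norm_eq_inner inner_vec_def)
  show ?thesis
    by (simp add: vec_eq_iff matrix_vector_mult_def outer_def n algebra_simps sum.distrib sum_distrib_left)
qed

lemma mv_outer_minus: "(W - c *\<^sub>R outer h phi) *v phi = W *v phi - (c * (norm phi)\<^sup>2) *\<^sub>R h"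
  using mv_outer[of W "-c" h phi] by (simp add: algebra_simps)

lemma norm_outer: "norm (outer h phi) = norm h * norm phi"
proof -
  have r: "norm (outer h phi $ i) = \<bar>h$i\<bar> * norm phi" for i
  proof -
    have "outer h phi $ i = (h$i) *\<^sub>R phi" by (simp add: outer_def vec_eq_iff)
    then show ?thesis by simp
  qed
  show ?thesis
    unfolding norm_vec_def[of "outer h phi"] r norm_vec_def[of h]
    by (simp add: L2_set_left_distrib)
qed

lemma softmax_pos: "softmax z $ i > 0"
  unfolding softmax_def by (simp add: sum_pos)

lemma softmax_sum: "(\<Sum>i\<in>UNIV. softmax z $ i) = 1"
proof -
  have "(\<Sum>j\<in>UNIV. exp (z$j)) > 0" by (simp add: sum_pos)
  then show ?thesis unfolding softmax_def by (simp add: sum_divide_distrib[symmetric])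
qed

lemma softmax_y: "softmax x $ y = 1 / (\<Sum>j\<in>UNIV. exp (x$j - x$y))"
proof -
  have "(\<Sum>j\<in>UNIV. exp (x$j - x$y)) = (\<Sum>j\<in>UNIV. exp (x$j)) / exp (x$y)"
    by (simp add: exp_diff sum_divide_distrib)
  then show ?thesis unfolding softmax_def by simp
qed

lemma softmax_deriv:
  fixes z g :: "real^'v"
  shows "((\<lambda>t. softmax (z + t *\<^sub>R g) $ k) has_field_derivative
     (softmax z $ k * g$k - softmax z $ k * (\<Sum>l\<in>UNIV. softmax z $ l * g$l))) (at 0)"
proof -
  define Z where "Z = (\<Sum>j\<in>UNIV. exp (z$j))"
  have Zp: "Z > 0" unfolding Z_def by (simp add: sum_pos)
  have eq: "(\<lambda>t. softmax (z + t *\<^sub>R g) $ k) = (\<lambda>t. exp (z$k + t * g$k) / (\<Sum>j\<in>UNIV. exp (z$j + t * g$j)))"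
    by (simp add: softmax_def)
  have "((\<lambda>t. exp (z$k + t * g$k) / (\<Sum>j\<in>UNIV. exp (z$j + t * g$j))) has_field_derivative
     ((exp (z$k) * g$k * Z - exp (z$k) * (\<Sum>j\<in>UNIV. exp (z$j) * g$j)) / Z\<^sup>2)) (at 0)"
    apply (rule derivative_eq_intros refl | simp)+
    using Zp by (auto simp: Z_def power2_eq_square)
  moreover have "(exp (z$k) * g$k * Z - exp (z$k) * (\<Sum>j\<in>UNIV. exp (z$j) * g$j)) / Z\<^sup>2
      = softmax z $ k * g$k - softmax z $ k * (\<Sum>l\<in>UNIV. softmax z $ l * g$l)"
    using Zp by (simp add: softmax_def Z_def[symmetric] field_simps power2_eq_square sum_divide_distrib[symmetric] sum_distrib_left)
  ultimately show ?thesis unfolding eq by simp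
qed

lemma D_pos:
  fixes p :: "real^'v" and y :: 'v
  assumes pos: "\<And>i. p$i > 0" and s1: "(\<Sum>i\<in>UNIV. p$i) = 1" and py: "p$y < 1"
  defines "g \<equiv> p - onehot y"
  defines "m \<equiv> (\<Sum>l\<in>UNIV. p$l * g$l)"
  shows "(\<Sum>j\<in>UNIV. p$j * ((p$j * g$j - p$j * m) - (p$y * g$y - p$y * m))) > 0"
proof -
  define a where "a = p$y"
  define R where "R = UNIV - {y}"
  define Q where "Q = (\<Sum>j\<in>R. (p$j)\<^sup>2)"
  define C where "C = (\<Sum>j\<in>R. (p$j)^3)"
  have a0: "0 < a" "a < 1" using pos py by (auto simp: a_def)
  have fin: "finite R" by (simp add: R_def)
  have gj: "j \<in> R \<Longrightarrow> g$j = p$j" for j by (simp add: g_def onehot_def R_def)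
  have gy: "g$y = a - 1" by (simp add: g_def onehot_def a_def)
  have split: "(\<Sum>j\<in>UNIV. f j) = f y + (\<Sum>j\<in>R. f j)" for f :: "'v \<Rightarrow> real"
    unfolding R_def by (simp add: sum.remove[of UNIV y])
  have sR: "(\<Sum>j\<in>R. p$j) = 1 - a" using s1 split[of "\<lambda>j. p$j"] by (simp add: a_def)
  have m: "m = a\<^sup>2 + Q - a"
    unfolding m_def split[of "\<lambda>l. p$l * g$l"] Q_def
    by (simp add: gy gj a_def power2_eq_square algebra_simps cong: sum.cong)
  have cs: "Q\<^sup>2 \<le> (1 - a) * C"
  proof -
    have "Q\<^sup>2 = (\<Sum>j\<in>R. sqrt (p$j) * (p$j * sqrt (p$j)))\<^sup>2"
      unfolding Q_def
      apply (rule arg_cong[where f="\<lambda>x. x\<^sup>2"])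
      apply (rule sum.cong, simp)
      using pos by (simp add: power2_eq_square less_imp_le)
    also have "\<dots> \<le> (\<Sum>j\<in>R. (sqrt (p$j))\<^sup>2) * (\<Sum>j\<in>R. (p$j * sqrt (p$j))\<^sup>2)"
      by (rule Cauchy_Schwarz_ineq_sum)
    also have "\<dots> = (1 - a) * C"
    proof -
      have "(\<Sum>j\<in>R. (sqrt (p$j))\<^sup>2) = 1 - a" unfolding sR[symmetric]
        using pos by (simp add: less_imp_le)
      moreover have "(\<Sum>j\<in>R. (p$j * sqrt (p$j))\<^sup>2) = C" unfolding C_def
        using pos by (intro sum.cong) (auto simp: power_mult_distrib less_imp_le power3_eq_cube power2_eq_square)
      ultimately show ?thesis by simp
    qed
    finally show ?thesis .
  qed
  have Q0: "Q \<ge> 0" unfolding Q_def by (simp add: sum_nonneg)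
  have C0: "C \<ge> 0" unfolding C_def using pos by (simp add: sum_nonneg less_imp_le)
  have expand: "(\<Sum>j\<in>UNIV. p$j * ((p$j * g$j - p$j * m) - (p$y * g$y - p$y * m)))
     = (a * (a * (a - 1) - a * m) + C - m * Q - (1 - a) * (a * (a - 1) - a * m)) - a * (a * (a - 1) - a * m)"
  proof -
    have "(\<Sum>j\<in>R. p$j * ((p$j * g$j - p$j * m) - (p$y * g$y - p$y * m)))
       = (\<Sum>j\<in>R. (p$j)^3 - m * (p$j)\<^sup>2 - (a * (a - 1) - a * m) * p$j)"
      by (rule sum.cong) (auto simp: gj gy a_def algebra_simps power2_eq_square power3_eq_cube)
    also have "\<dots> = C - m * Q - (a * (a - 1) - a * m) * (1 - a)"
      by (simp add: sum_subtractf sum_distrib_left[symmetric] C_def Q_def sR)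
    finally have h: "(\<Sum>j\<in>R. p$j * ((p$j * g$j - p$j * m) - (p$y * g$y - p$y * m)))
       = C - m * Q - (a * (a - 1) - a * m) * (1 - a)" .
    show ?thesis
      unfolding split[of "\<lambda>j. p$j * ((p$j * g$j - p$j * m) - (p$y * g$y - p$y * m))"] h
      by (simp add: gy a_def algebra_simps)
  qed
  have "(a * (a * (a - 1) - a * m) + C - m * Q - (1 - a) * (a * (a - 1) - a * m)) - a * (a * (a - 1) - a * m)
     = C - Q\<^sup>2 + 2 * a * Q * (1 - a) + a * (1 - a)^3"
    unfolding m by (simp add: algebra_simps power2_eq_square power3_eq_cube)
  moreover have "C - Q\<^sup>2 \<ge> 0" using cs C0 a0
    by (smt (verit) mult_left_le_one_le)
  moreover have "2 * a * Q * (1 - a) \<ge> 0" using a0 Q0 by simp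
  moreover have "a * (1 - a)^3 > 0" using a0 by simp
  ultimately show ?thesis unfolding expand by linarith
qed

lemma isCont_E: "isCont (\<lambda>x::real. if x = 0 then 1 else (1 - exp (-x)) / x) 0"
proof -
  have "((\<lambda>x::real. 1 - exp (-x)) has_field_derivative 1) (at 0)"
    by (rule derivative_eq_intros refl | simp)+
  then have "((\<lambda>x::real. ((1 - exp (-x)) - (1 - exp (-0))) / (x - 0)) \<longlongrightarrow> 1) (at 0)"
    by (simp only: has_field_derivative_iff)
  then have "((\<lambda>x::real. (1 - exp (-x)) / x) \<longlongrightarrow> 1) (at 0)" by simp
  moreover have "eventually (\<lambda>x::real. (if x = 0 then 1 else (1 - exp (-x)) / x) = (1 - exp (-x)) / x) (at 0)"
    by (simp add: eventually_at_filter)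
  ultimately show ?thesis unfolding isCont_def by (simp add: tendsto_cong)
qed

lemma isCont_quot:
  fixes w :: "real \<Rightarrow> real"
  assumes "(w has_field_derivative D) (at 0)" "w 0 = 0"
  shows "isCont (\<lambda>t. if t = 0 then D else w t / t) 0"
proof -
  have "((\<lambda>t. (w t - w 0) / (t - 0)) \<longlongrightarrow> D) (at 0)"
    using assms(1) by (simp only: has_field_derivative_iff)
  then have "((\<lambda>t. w t / t) \<longlongrightarrow> D) (at 0)" using assms(2) by simp
  moreover have "eventually (\<lambda>t::real. (if t = 0 then D else w t / t) = w t / t) (at 0)"
    by (simp add: eventually_at_filter)
  ultimately show ?thesis unfolding isCont_def by (simp add: tendsto_cong)
qed

theorem corollary5:
  fixes phi :: "real^'d" and W :: "real^'d^'v" and y ystar :: 'v and \<kappa> :: real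
  defines "\<mu> \<equiv> (norm phi)\<^sup>2"
      and "p \<equiv> softmax (W *v phi)"
      and "g \<equiv> softmax (W *v phi) - onehot y"
  defines "S \<equiv> p$y + p$ystar"
  defines "\<tau> \<equiv> 1 - S" and "pbar \<equiv> p$y / S"
  defines "B \<equiv> sqrt 2"
  assumes mu_pos: "\<mu> > 0"
      and kappa: "\<kappa> \<ge> 0"
      and ystar: "ystar \<noteq> y" "\<forall>j. j \<noteq> y \<longrightarrow> p$j \<le> p$ystar"
      and gamma0: "\<exists>\<gamma>0>0. 4 * B * exp 2 / p$ystar * \<tau> \<le> \<gamma>0
                        \<and> \<gamma>0 \<le> 4 * pbar * (1 - pbar)\<^sup>2 - 6 * \<tau>"
  shows "\<exists>\<eta>0>0. \<forall>\<eta> \<rho>.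
           let \<rho>t = (if g = 0 then 0 else \<rho> * sqrt \<mu> / norm g);
               \<alpha>GD = conf_ratio phi (gd_step \<eta> phi y W) W y;
               \<alpha>SAM = conf_ratio phi (sam_step \<eta> \<rho> phi y W) W y
           in (0 < \<bar>\<eta>\<bar> \<and> \<bar>\<eta>\<bar> \<le> 1 \<and> \<bar>\<eta>\<bar> \<le> \<eta>0 \<and> \<bar>\<rho>\<bar> = \<kappa> * sqrt \<bar>\<eta>\<bar>
               \<and> (\<eta> * \<mu> * \<rho>t > 0 \<or> \<rho>t = 0))
              \<longrightarrow> \<alpha>SAM \<ge> \<alpha>GD
                  \<and> (\<rho>t \<noteq> 0 \<and> 0 < p$ystar \<and> p$ystar < 1 \<longrightarrow> \<alpha>SAM > \<alpha>GD)
                  \<and> (\<rho>t = 0 \<longrightarrow> \<alpha>SAM = \<alpha>GD)"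
proof -
  define z where "z = W *v phi"
  have pz: "p = softmax z" unfolding p_def z_def ..
  have gp: "g = p - onehot y" unfolding g_def p_def ..
  define a where "a = p$y"
  have ppos: "\<And>i. p$i > 0" unfolding pz by (rule softmax_pos)
  have psum: "(\<Sum>i\<in>UNIV. p$i) = 1" unfolding pz by (rule softmax_sum)
  have a1: "a < 1"
  proof -
    have "(\<Sum>i\<in>UNIV. p$i) \<ge> (\<Sum>i\<in>{y, ystar}. p$i)"
      by (rule sum_mono2) (use ppos in \<open>auto simp: less_imp_le\<close>)
    then show ?thesis using psum ystar(1) ppos[of ystar] by (simp add: a_def)
  qed
  have a0: "a > 0" using ppos by (simp add: a_def)
  have gy: "g$y = a - 1" by (simp add: gp onehot_def a_def)
  have gne: "g \<noteq> 0" using gy a1 by auto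
  define ng where "ng = norm g"
  have ng0: "ng > 0" using gne by (simp add: ng_def)
  have nphi: "norm phi = sqrt \<mu>" unfolding \<mu>_def by simp
  have sm0: "sqrt \<mu> > 0" using mu_pos by simp
  define m where "m = (\<Sum>l\<in>UNIV. p$l * g$l)"
  define Dw where "Dw j = (p$j * g$j - p$j * m) - (p$y * g$y - p$y * m)" for j
  define q where "q t = softmax (z + t *\<^sub>R g)" for t
  define w where "w j t = (q t $ j - q t $ y) - (p$j - p$y)" for j t
  define WW where "WW j t = (if t = 0 then Dw j else w j t / t)" for j t
  define E where "E x = (if x = 0 then 1 else (1 - exp (-x)) / x)" for x :: real
  have q0: "q 0 = p" by (simp add: q_def pz)
  have w0: "w j 0 = 0" for j by (simp add: w_def q0)
  have wD: "(w j has_field_derivative Dw j) (at 0)" for j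
  proof -
    have "((\<lambda>t. (q t $ j - q t $ y) - (p$j - p$y)) has_field_derivative
           ((p$j * g$j - p$j * m) - (p$y * g$y - p$y * m) - 0)) (at 0)"
      unfolding q_def m_def pz
      by (intro DERIV_diff softmax_deriv DERIV_const)
    then show ?thesis unfolding w_def[abs_def] Dw_def by simp
  qed
  have cE: "isCont E 0" unfolding E_def[abs_def] by (rule isCont_E)
  have cWW: "isCont (WW j) 0" for j unfolding WW_def[abs_def] by (rule isCont_quot[OF wD w0])
  have cw: "isCont (w j) 0" for j using wD by (rule DERIV_isCont)
  have grad: "gradF phi y W = outer g phi" unfolding gradF_outer gp pz z_def ..
  have ngrad: "norm (gradF phi y W) = ng * sqrt \<mu>" unfolding grad norm_outer ng_def nphi ..
  have xG: "gd_step \<eta> phi y W *v phi = z - (\<eta> * \<mu>) *\<^sub>R g" for \<eta>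
    unfolding gd_step_def grad mv_outer_minus \<mu>_def z_def ..
  have xS: "sam_step \<eta> \<rho> phi y W *v phi = z - (\<eta> * \<mu>) *\<^sub>R (q (\<rho> * sqrt \<mu> / ng) - onehot y)" for \<eta> \<rho>
  proof -
    have pert: "(W + (\<rho> / norm (outer g phi)) *\<^sub>R outer g phi) *v phi = z + (\<rho> * sqrt \<mu> / ng) *\<^sub>R g"
      unfolding ngrad[unfolded grad] mv_outer z_def[symmetric] nphi
      using mu_pos sm0 ng0 by (simp add: field_simps power2_eq_square)
    show ?thesis
      unfolding sam_step_def grad unfolding gradF_outer mv_outer_minus pert \<mu>_def[symmetric]
      by (simp add: q_def z_def)
  qed
  have aGD: "conf_ratio phi (gd_step \<eta> phi y W) W y = 1 / (\<Sum>j\<in>UNIV. exp ((z - (\<eta> * \<mu>) *\<^sub>R g)$j - (z - (\<eta> * \<mu>) *\<^sub>R g)$y)) / a" for \<eta>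
    unfolding conf_ratio_def xG softmax_y[of _ y] a_def pz z_def ..
  have aSAM: "conf_ratio phi (sam_step \<eta> \<rho> phi y W) W y = 1 / (\<Sum>j\<in>UNIV. exp ((z - (\<eta> * \<mu>) *\<^sub>R (q (\<rho> * sqrt \<mu> / ng) - onehot y))$j
       - (z - (\<eta> * \<mu>) *\<^sub>R (q (\<rho> * sqrt \<mu> / ng) - onehot y))$y)) / a" for \<eta> \<rho>
    unfolding conf_ratio_def xS softmax_y[of _ y] a_def pz z_def ..
  show ?thesis
  proof (cases "\<kappa> = 0")
    case True
    show ?thesis
    proof (intro exI[of _ 1] conjI allI)
      fix \<eta> \<rho> :: real
      show "0 < (1::real)" by simp
      have "sam_step \<eta> 0 phi y W = gd_step \<eta> phi y W"
        by (simp add: sam_step_def gd_step_def)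
      then show "let \<rho>t = (if g = 0 then 0 else \<rho> * sqrt \<mu> / norm g);
               \<alpha>GD = conf_ratio phi (gd_step \<eta> phi y W) W y;
               \<alpha>SAM = conf_ratio phi (sam_step \<eta> \<rho> phi y W) W y
           in (0 < \<bar>\<eta>\<bar> \<and> \<bar>\<eta>\<bar> \<le> 1 \<and> \<bar>\<eta>\<bar> \<le> 1 \<and> \<bar>\<rho>\<bar> = \<kappa> * sqrt \<bar>\<eta>\<bar>
               \<and> (\<eta> * \<mu> * \<rho>t > 0 \<or> \<rho>t = 0))
              \<longrightarrow> \<alpha>SAM \<ge> \<alpha>GD
                  \<and> (\<rho>t \<noteq> 0 \<and> 0 < p$ystar \<and> p$ystar < 1 \<longrightarrow> \<alpha>SAM > \<alpha>GD)
                  \<and> (\<rho>t = 0 \<longrightarrow> \<alpha>SAM = \<alpha>GD)"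
        using True by (simp add: Let_def)
    qed
  next
    case False
    then have kp: "\<kappa> > 0" using kappa by simp
    define k where "k = \<kappa> * sqrt \<mu> / ng"
    have k0: "k > 0" using kp sm0 ng0 by (simp add: k_def)
    define tt where "tt \<eta> = k * (sgn \<eta> * sqrt \<bar>\<eta>\<bar>)" for \<eta> :: real
    define cc where "cc \<eta> = \<eta> * \<mu>" for \<eta> :: real
    define aa where "aa j \<eta> = exp (z$j - z$y - cc \<eta> * (g$j - g$y))" for j \<eta>
    define GG where "GG \<eta> = (\<Sum>j\<in>UNIV. aa j \<eta> * E (cc \<eta> * w j (tt \<eta>)) * WW j (tt \<eta>))" for \<eta>
    define L where "L = (\<Sum>j\<in>UNIV. exp (z$j - z$y) * Dw j)"
    have Lpos: "L > 0"
    proof -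
      have e: "exp (z$j - z$y) = p$j / a" for j
        unfolding a_def pz softmax_def by (simp add: exp_diff sum_pos less_imp_neq[symmetric])
      have "L = (\<Sum>j\<in>UNIV. p$j * Dw j) / a" unfolding L_def e by (simp add: sum_divide_distrib)
      moreover have "(\<Sum>j\<in>UNIV. p$j * Dw j) > 0" unfolding Dw_def m_def gp
        by (rule D_pos[OF ppos psum]) (use a1 a_def in simp)
      ultimately show ?thesis using a0 by simp
    qed
    have tt0: "(tt \<longlongrightarrow> 0) (at 0)"
    proof -
      have ab: "\<bar>tt \<eta>\<bar> = k * sqrt \<bar>\<eta>\<bar>" for \<eta>
        using k0 by (cases "\<eta> = 0") (auto simp: tt_def abs_mult)
      have "((\<lambda>\<eta>::real. k * sqrt \<bar>\<eta>\<bar>) \<longlongrightarrow> k * sqrt \<bar>0\<bar>) (at 0)"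
        by (intro tendsto_intros)
      then have "((\<lambda>\<eta>. \<bar>tt \<eta>\<bar>) \<longlongrightarrow> 0) (at 0)" unfolding ab by simp
      then show ?thesis by (simp only: tendsto_rabs_zero_iff)
    qed
    have cc0: "(cc \<longlongrightarrow> 0) (at 0)"
    proof -
      have "((\<lambda>\<eta>::real. \<eta> * \<mu>) \<longlongrightarrow> 0 * \<mu>) (at 0)" by (intro tendsto_intros)
      then show ?thesis by (simp add: cc_def[abs_def])
    qed
    have lim: "(GG \<longlongrightarrow> L) (at 0)"
      unfolding GG_def[abs_def] L_def
    proof (rule tendsto_sum)
      fix j
      have wt: "((\<lambda>\<eta>. w j (tt \<eta>)) \<longlongrightarrow> 0) (at 0)" using isCont_tendsto_compose[OF cw tt0] w0 by simp
      have cw0: "((\<lambda>\<eta>. cc \<eta> * w j (tt \<eta>)) \<longlongrightarrow> 0) (at 0)" using tendsto_mult[OF cc0 wt] by simp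
      have Et: "((\<lambda>\<eta>. E (cc \<eta> * w j (tt \<eta>))) \<longlongrightarrow> 1) (at 0)"
        using isCont_tendsto_compose[OF cE cw0] by (simp add: E_def)
      have WWt: "((\<lambda>\<eta>. WW j (tt \<eta>)) \<longlongrightarrow> Dw j) (at 0)"
        using isCont_tendsto_compose[OF cWW tt0] by (simp add: WW_def)
      have aat: "((\<lambda>\<eta>. aa j \<eta>) \<longlongrightarrow> exp (z$j - z$y)) (at 0)"
      proof -
        have "((\<lambda>\<eta>. exp (z$j - z$y - cc \<eta> * (g$j - g$y))) \<longlongrightarrow> exp (z$j - z$y - 0 * (g$j - g$y))) (at 0)"
          by (intro tendsto_intros cc0)
        then show ?thesis by (simp add: aa_def[abs_def])
      qed
      show "((\<lambda>\<eta>. aa j \<eta> * E (cc \<eta> * w j (tt \<eta>)) * WW j (tt \<eta>)) \<longlongrightarrow> exp (z$j - z$y) * Dw j) (at 0)"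
        using tendsto_mult[OF tendsto_mult[OF aat Et] WWt] by simp
    qed
    have "eventually (\<lambda>\<eta>. GG \<eta> > 0) (at 0)" using order_tendstoD(1)[OF lim Lpos] .
    then obtain d where d: "d > 0" "\<And>\<eta>. \<eta> \<noteq> 0 \<Longrightarrow> dist \<eta> 0 < d \<Longrightarrow> GG \<eta> > 0"
      unfolding eventually_at by auto
    show ?thesis
    proof (intro exI[of _ "d/2"] conjI allI)
      show "0 < d/2" using d by simp
      fix \<eta> \<rho> :: real
      define \<rho>t where "\<rho>t = \<rho> * sqrt \<mu> / ng"
      have \<rho>t_eq: "(if g = 0 then 0 else \<rho> * sqrt \<mu> / norm g) = \<rho>t" using gne by (simp add: \<rho>t_def ng_def)
      show "let \<rho>t = (if g = 0 then 0 else \<rho> * sqrt \<mu> / norm g);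
               \<alpha>GD = conf_ratio phi (gd_step \<eta> phi y W) W y;
               \<alpha>SAM = conf_ratio phi (sam_step \<eta> \<rho> phi y W) W y
           in (0 < \<bar>\<eta>\<bar> \<and> \<bar>\<eta>\<bar> \<le> 1 \<and> \<bar>\<eta>\<bar> \<le> d/2 \<and> \<bar>\<rho>\<bar> = \<kappa> * sqrt \<bar>\<eta>\<bar>
               \<and> (\<eta> * \<mu> * \<rho>t > 0 \<or> \<rho>t = 0))
              \<longrightarrow> \<alpha>SAM \<ge> \<alpha>GD
                  \<and> (\<rho>t \<noteq> 0 \<and> 0 < p$ystar \<and> p$ystar < 1 \<longrightarrow> \<alpha>SAM > \<alpha>GD)
                  \<and> (\<rho>t = 0 \<longrightarrow> \<alpha>SAM = \<alpha>GD)"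
        unfolding \<rho>t_eq Let_def
      proof (intro impI)
        assume H: "0 < \<bar>\<eta>\<bar> \<and> \<bar>\<eta>\<bar> \<le> 1 \<and> \<bar>\<eta>\<bar> \<le> d/2 \<and> \<bar>\<rho>\<bar> = \<kappa> * sqrt \<bar>\<eta>\<bar> \<and> (\<eta> * \<mu> * \<rho>t > 0 \<or> \<rho>t = 0)"
        have rne: "\<rho> \<noteq> 0" using H kp by auto
        have rtne: "\<rho>t \<noteq> 0" using rne sm0 ng0 by (simp add: \<rho>t_def)
        have pos: "\<eta> * \<mu> * \<rho>t > 0" using H rtne by auto
        have er: "\<eta> * \<rho> > 0"
        proof -
          have "\<eta> * \<mu> * \<rho>t = (\<eta> * \<rho>) * (\<mu> * sqrt \<mu> / ng)" by (simp add: \<rho>t_def)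
          moreover have "\<mu> * sqrt \<mu> / ng > 0" using mu_pos sm0 ng0 by simp
          ultimately show ?thesis using pos by (metis zero_less_mult_pos2)
        qed
        have "sgn \<rho> = sgn \<eta>" using er by (auto simp: zero_less_mult_iff sgn_if)
        then have "\<rho> = sgn \<eta> * (\<kappa> * sqrt \<bar>\<eta>\<bar>)" using H by (metis sgn_mult_abs)
        then have rt_tt: "\<rho>t = tt \<eta>" by (simp add: \<rho>t_def tt_def k_def)
        have Gp: "GG \<eta> > 0" using d(2)[of \<eta>] H by auto
        have cne: "cc \<eta> \<noteq> 0" using H mu_pos by (simp add: cc_def)
        have TGe: "(\<Sum>j\<in>UNIV. exp ((z - (\<eta> * \<mu>) *\<^sub>R g)$j - (z - (\<eta> * \<mu>) *\<^sub>R g)$y)) = (\<Sum>j\<in>UNIV. aa j \<eta>)"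
          by (simp add: aa_def cc_def algebra_simps)
        have TSe: "(\<Sum>j\<in>UNIV. exp ((z - (\<eta> * \<mu>) *\<^sub>R (q \<rho>t - onehot y))$j - (z - (\<eta> * \<mu>) *\<^sub>R (q \<rho>t - onehot y))$y))
             = (\<Sum>j\<in>UNIV. aa j \<eta> * exp (-(cc \<eta> * w j \<rho>t)))"
          by (rule sum.cong) (simp_all add: aa_def cc_def w_def gp exp_add[symmetric] algebra_simps)
        have diff: "(\<Sum>j\<in>UNIV. aa j \<eta>) - (\<Sum>j\<in>UNIV. aa j \<eta> * exp (-(cc \<eta> * w j \<rho>t))) = cc \<eta> * \<rho>t * GG \<eta>"
        proof -
          have "aa j \<eta> - aa j \<eta> * exp (-(cc \<eta> * w j \<rho>t)) = cc \<eta> * \<rho>t * (aa j \<eta> * E (cc \<eta> * w j \<rho>t) * WW j \<rho>t)" for j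
          proof (cases "w j \<rho>t = 0")
            case True then show ?thesis using rtne by (simp add: E_def WW_def)
          next
            case False then show ?thesis using rtne cne by (simp add: E_def WW_def field_simps)
          qed
          then show ?thesis unfolding GG_def rt_tt[symmetric]
            by (simp add: sum_subtractf[symmetric] sum_distrib_left)
        qed
        have TSpos: "(\<Sum>j\<in>UNIV. aa j \<eta> * exp (-(cc \<eta> * w j \<rho>t))) > 0"
          by (rule sum_pos) (auto simp: aa_def)
        have "cc \<eta> * \<rho>t * GG \<eta> > 0" using pos Gp by (simp add: cc_def)
        then have lt: "(\<Sum>j\<in>UNIV. aa j \<eta> * exp (-(cc \<eta> * w j \<rho>t))) < (\<Sum>j\<in>UNIV. aa j \<eta>)"
          using diff by linarith
        have "1 / (\<Sum>j\<in>UNIV. aa j \<eta>) < 1 / (\<Sum>j\<in>UNIV. aa j \<eta> * exp (-(cc \<eta> * w j \<rho>t)))"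
          using lt TSpos by (intro divide_strict_left_mono) auto
        then have "1 / (\<Sum>j\<in>UNIV. aa j \<eta>) / a < 1 / (\<Sum>j\<in>UNIV. aa j \<eta> * exp (-(cc \<eta> * w j \<rho>t))) / a"
          using a0 by (rule divide_strict_right_mono)
        then have strict: "conf_ratio phi (gd_step \<eta> phi y W) W y < conf_ratio phi (sam_step \<eta> \<rho> phi y W) W y"
          unfolding aGD aSAM \<rho>t_def[symmetric] TGe TSe .
        then show "conf_ratio phi (gd_step \<eta> phi y W) W y \<le> conf_ratio phi (sam_step \<eta> \<rho> phi y W) W y
          \<and> (\<rho>t \<noteq> 0 \<and> 0 < p$ystar \<and> p$ystar < 1 \<longrightarrow> conf_ratio phi (gd_step \<eta> phi y W) W y < conf_ratio phi (sam_step \<eta> \<rho> phi y W) W y)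
          \<and> (\<rho>t = 0 \<longrightarrow> conf_ratio phi (sam_step \<eta> \<rho> phi y W) W y = conf_ratio phi (gd_step \<eta> phi y W) W y)"
          using rtne by simp
      qed
    qed
  qed
qed

end
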